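(* Let $A(y)=A_1(y)+A_2(y)+A_3(y)+A_4(y)$, $y\in\mathbb R$, where $$A_1(y)=-\frac1{2\sqrt{2\pi}}\int_0^\infty e^{-2(t-y)^2}\,\mathrm{erfc}\,t\,dt,\qquad A_2(y)=\frac1{\sqrt{2\pi}}\int_0^\infty e^{-2(t-y)^2}\,t\Big(\frac{e^{-t^2}}{\sqrt\pi}-t\,\mathrm{erfc}\,t\Big)dt,$$ $$A_3(y)=\frac14\big(1+\mathrm{erf}(\sqrt2 y)\big)\Big(-\frac{y e^{-2y^2}}{\sqrt{2\pi}}+\Big(\frac14+y^2\Big)\big(1-\mathrm{erf}(\sqrt2 y)\big)\Big),$$ $$A_4(y)=-\frac1{\sqrt{2\pi}}\int_0^\infty dt_1\int_0^{t_1}dt_2\,\frac1{t_1-t_2}\Big(e^{-2(t_1-y)^2}\big(\mathrm{erf}(t_1-t_2)+\mathrm{erf}(\sqrt2(t_2-y))\big)+e^{-2(t_2-y)^2}\big(\mathrm{erf}(t_1-t_2)-\mathrm{erf}(\sqrt2(t_1-y))\big)\Big).$$ Then, as $y\to-\infty$, $$A(y)\sim\frac{|y|\,e^{-2y^2}}{2(2\pi)^{1/2}}.$$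
   Context: $A(y)$ is the function such that the edge-scaled density of the soft-disk two-dimensional one-component plasma satisfies $\rho^{\rm edge}_{(1)}(y;\Gamma)=\rho^{\rm edge}_{(1)}(y;2)-\frac{\Gamma-2}{\pi}A(y)+\mathcal O((\Gamma-2)^2)$. $\mathrm{erf}$ is the error function and $\mathrm{erfc}=1-\mathrm{erf}$. *)

theory Defs
  imports "HOL-Analysis.Analysis" "HOL-Library.Landau_Symbols"
begin

definition erfc :: "real \<Rightarrow> real" where
  "erfc x = 2 / sqrt pi * integral {x..} (\<lambda>t. exp (- (t\<^sup>2)))"

definition erf :: "real \<Rightarrow> real" where
  "erf x = 1 - erfc x"

definition A1 :: "real \<Rightarrow> real" where
  "A1 y = - (1 / (2 * sqrt (2 * pi))) *
     integral {0..} (\<lambda>t. exp (- 2 * (t - y)\<^sup>2) * erfc t)"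

definition A2 :: "real \<Rightarrow> real" where
  "A2 y = (1 / sqrt (2 * pi)) *
     integral {0..} (\<lambda>t. exp (- 2 * (t - y)\<^sup>2) * t *
        (exp (- (t\<^sup>2)) / sqrt pi - t * erfc t))"

definition A3 :: "real \<Rightarrow> real" where
  "A3 y = (1/4) * (1 + erf (sqrt 2 * y)) *
     (- (y * exp (- 2 * y\<^sup>2)) / sqrt (2 * pi)
      + (1/4 + y\<^sup>2) * (1 - erf (sqrt 2 * y)))"

definition A4 :: "real \<Rightarrow> real" where
  "A4 y = - (1 / sqrt (2 * pi)) *
     integral {0..} (\<lambda>t1. integral {0..t1} (\<lambda>t2.
        (1 / (t1 - t2)) *
        (exp (- 2 * (t1 - y)\<^sup>2) * (erf (t1 - t2) + erf (sqrt 2 * (t2 - y)))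
         + exp (- 2 * (t2 - y)\<^sup>2) * (erf (t1 - t2) - erf (sqrt 2 * (t1 - y))))))"

definition A :: "real \<Rightarrow> real" where
  "A y = A1 y + A2 y + A3 y + A4 y"

end

theory Submission
  imports Defs "HOL-Probability.Probability" "HOL-Real_Asymp.Real_Asymp"
begin

lemma abs_integral_le:
  fixes f g :: "real \<Rightarrow> real"
  assumes "g integrable_on S" "\<And>x. x \<in> S \<Longrightarrow> \<bar>f x\<bar> \<le> g x"
  shows "\<bar>integral S f\<bar> \<le> integral S g"
proof (cases "f integrable_on S")
  case True thus ?thesis using integral_norm_bound_integral[OF True assms(1)] assms(2) by auto
next
  case False then have "integral S f = 0" by (simp add: not_integrable_integral)
  moreover have "integral S g \<ge> 0" using assms
    by (intro Henstock_Kurzweil_Integration.integral_nonneg) (auto intro: order_trans[OF abs_ge_zero])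
  ultimately show ?thesis by simp
qed

lemma gauss_le: "exp (-((t::real)\<^sup>2)) \<le> exp (1/4) * exp (-1 * t)"
proof -
  have "0 \<le> (t - 1/2)^2" by simp
  then have "-(t\<^sup>2) \<le> 1/4 + (-1*t)" by (simp add: power2_eq_square algebra_simps)
  then show ?thesis by (simp flip: exp_add)
qed

lemma gauss_int: "(\<lambda>t::real. exp (-(t\<^sup>2))) integrable_on {x..}"
proof (rule measurable_bounded_by_integrable_imp_integrable_real[where g="\<lambda>t. exp(1/4::real) * exp(-1*t)"])
  show "(\<lambda>t. exp (-(t\<^sup>2))) \<in> borel_measurable (lebesgue_on {x..})"
    by (intro continuous_imp_measurable_on_sets_lebesgue continuous_intros) auto
  show "(\<lambda>t. exp(1/4::real) * exp(-1*t)) integrable_on {x..}"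
    by (intro integrable_on_mult_right integrable_on_exp_minus_to_infinity) auto
  show "\<bar>exp (-(t\<^sup>2))\<bar> \<le> exp(1/4::real) * exp(-1*t)" for t::real using gauss_le[of t] by simp
qed auto

lemma gauss_int_Icc: "(\<lambda>t::real. exp (-(t\<^sup>2))) integrable_on {x..z}"
  by (intro integrable_continuous_interval continuous_intros)

lemma gauss_split:
  fixes x z :: real
  assumes "x \<le> z"
  shows "integral {x..} (\<lambda>t. exp (-(t\<^sup>2))) = integral {x..z} (\<lambda>t. exp (-(t\<^sup>2))) + integral {z..} (\<lambda>t. exp (-(t\<^sup>2)))"
proof -
  have "((\<lambda>t. exp (-(t\<^sup>2))) has_integral (integral {x..z} (\<lambda>t. exp (-(t\<^sup>2))) + integral {z..} (\<lambda>t. exp (-(t\<^sup>2))))) ({x..z} \<union> {z..})"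
    proof (rule has_integral_Un)
    show "negligible ({x..z} \<inter> {z..})" using assms by (subgoal_tac "{x..z} \<inter> {z..} = {z}") auto
  qed (use gauss_int gauss_int_Icc in auto)
  moreover have "{x..z} \<union> {z..} = {x..}" using assms by auto
  ultimately show ?thesis by (simp add: integral_unique)
qed

lemma gauss_half: "integral {0..} (\<lambda>t::real. exp (-(t\<^sup>2))) = sqrt pi / 2"
proof -
  have h: "has_bochner_integral lborel (\<lambda>x. indicator {0..} x *\<^sub>R exp (- x\<^sup>2)) (sqrt pi / 2)"
    by (rule gaussian_moment_0)
  then have "((\<lambda>x. indicator {0..} x *\<^sub>R exp (- x\<^sup>2) :: real) has_integral (sqrt pi / 2)) UNIV"
    using has_integral_integral_lborel has_bochner_integral_iff by metis
  then have "((\<lambda>x. if x \<in> {0..} then exp (- x\<^sup>2) else 0 :: real) has_integral (sqrt pi / 2)) UNIV"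
    by (rule has_integral_cong[THEN iffD1, rotated]) (auto simp: indicator_def)
  then have "((\<lambda>x. exp (- x\<^sup>2) :: real) has_integral (sqrt pi / 2)) {0..}"
    using has_integral_restrict_UNIV[of "{0..}" "\<lambda>x. exp (- x\<^sup>2)"] by simp blast
  then show ?thesis by (simp add: integral_unique)
qed


lemma to_inf_FTC:
  fixes F h :: "real \<Rightarrow> real"
  assumes der: "\<And>t. t \<ge> a \<Longrightarrow> (F has_real_derivative h t) (at t)"
    and nn: "\<And>t. t \<ge> a \<Longrightarrow> h t \<ge> 0" and cont: "continuous_on {a..} h"
    and lim: "(F \<longlongrightarrow> L) at_top"
  shows "(h has_integral (L - F a)) {a..}"
proof (rule has_integral_to_inf)
  show "h integrable_on {a..y}" for y
    by (rule integrable_continuous_interval) (rule continuous_on_subset[OF cont], auto)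
  have "(h has_integral (F y - F a)) {a..y}" if "a \<le> y" for y
    by (rule fundamental_theorem_of_calculus[OF that])
       (auto intro!: has_field_derivative_at_within der simp flip: has_real_derivative_iff_has_vector_derivative)
  then have "\<forall>\<^sub>F y in at_top. integral {a..y} h = F y - F a"
    by (auto simp: eventually_at_top_linorder intro!: exI[of _ a] integral_unique)
  moreover have "((\<lambda>y. F y - F a) \<longlongrightarrow> L - F a) at_top" by (intro tendsto_intros lim)
  ultimately show "((\<lambda>y. integral {a..y} h) \<longlongrightarrow> L - F a) at_top"
    by (simp add: filterlim_cong)
qed (use nn in auto)

definition gI :: "real \<Rightarrow> real" where
  "gI x = integral {x..} (\<lambda>t. exp (- (t\<^sup>2)))"

lemma erfc_gI: "erfc x = 2 / sqrt pi * gI x"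
  by (simp add: erfc_def gI_def)

lemma gI_nonneg: "0 \<le> gI x"
  unfolding gI_def by (rule Henstock_Kurzweil_Integration.integral_nonneg[OF gauss_int]) auto

lemma seg_bounds:
  fixes x z :: real assumes "x \<le> z"
  shows "0 \<le> integral {x..z} (\<lambda>t. exp (- (t\<^sup>2)))" "integral {x..z} (\<lambda>t. exp (- (t\<^sup>2))) \<le> z - x"
proof -
  show "0 \<le> integral {x..z} (\<lambda>t. exp (- (t\<^sup>2)))"
    by (rule Henstock_Kurzweil_Integration.integral_nonneg[OF gauss_int_Icc]) auto
  have "integral {x..z} (\<lambda>t. exp (- (t\<^sup>2))) \<le> integral {x..z} (\<lambda>t. 1)"
    by (rule integral_le[OF gauss_int_Icc]) auto
  also have "\<dots> = z - x" using assms by simp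
  finally show "integral {x..z} (\<lambda>t. exp (- (t\<^sup>2))) \<le> z - x" .
qed

lemma gI_split: "x \<le> z \<Longrightarrow> gI x = integral {x..z} (\<lambda>t. exp (- (t\<^sup>2))) + gI z"
  unfolding gI_def by (rule gauss_split)

lemma gI_anti: "x \<le> z \<Longrightarrow> gI z \<le> gI x"
  using gI_split seg_bounds by fastforce

lemma gI_lip: "x \<le> z \<Longrightarrow> gI x - gI z \<le> z - x"
  using gI_split seg_bounds by fastforce

lemma gI_0: "gI 0 = sqrt pi / 2"
  unfolding gI_def by (rule gauss_half)

lemma gI_neg_aux: assumes "0 \<le> x" shows "gI (-x) = sqrt pi - gI x"
proof -
  have "((\<lambda>t::real. exp (- (t\<^sup>2))) has_integral integral {0..x} (\<lambda>t. exp (- (t\<^sup>2)))) {0..x}"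
    using gauss_int_Icc by (rule integrable_integral)
  then have "((\<lambda>t::real. exp (- ((-t)\<^sup>2))) has_integral integral {0..x} (\<lambda>t. exp (- (t\<^sup>2)))) {-x..-0}"
    by (subst has_integral_reflect_real) 
  then have "integral {-x..0} (\<lambda>t. exp (- (t\<^sup>2))) = integral {0..x} (\<lambda>t. exp (- (t\<^sup>2)))"
    by (simp add: integral_unique)
  moreover have "gI (-x) = integral {-x..0} (\<lambda>t. exp (- (t\<^sup>2))) + gI 0" using assms by (intro gI_split) auto
  moreover have "gI 0 = integral {0..x} (\<lambda>t. exp (- (t\<^sup>2))) + gI x" using assms by (intro gI_split) auto
  ultimately show ?thesis using gI_0 by simp
qed

lemma gI_neg: "gI (-x) = sqrt pi - gI x"
proof (cases "0 \<le> x")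
  case True then show ?thesis by (rule gI_neg_aux)
next
  case False then have "gI (-(-x)) = sqrt pi - gI (-x)" by (intro gI_neg_aux) auto
  then show ?thesis by simp
qed

lemma erfc_neg: "erfc (-x) = 2 - erfc x"
  by (simp add: erfc_gI gI_neg field_simps)

lemma erfc_nonneg: "0 \<le> erfc x"
  by (simp add: erfc_gI gI_nonneg)

lemma erfc_0: "erfc 0 = 1"
  by (simp add: erfc_gI gI_0)

lemma erfc_anti: "x \<le> z \<Longrightarrow> erfc z \<le> erfc x"
  by (simp add: erfc_gI gI_anti divide_right_mono)

lemma erfc_le1: "0 \<le> x \<Longrightarrow> erfc x \<le> 1"
  using erfc_anti[of 0 x] erfc_0 by simp

lemma erf_bounds: "0 \<le> x \<Longrightarrow> 0 \<le> erf x \<and> erf x \<le> 1"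
  using erfc_le1[of x] erfc_nonneg[of x] by (simp add: erf_def)

lemma erf_mono: "z \<le> x \<Longrightarrow> erf z \<le> erf x"
  using erfc_anti[of z x] by (simp add: erf_def)

lemma erf_lip: assumes "z \<le> x" shows "erf x - erf z \<le> 2 / sqrt pi * (x - z)"
proof -
  have "erf x - erf z = 2 / sqrt pi * (gI z - gI x)" by (simp add: erf_def erfc_gI right_diff_distrib)
  also have "\<dots> \<le> 2 / sqrt pi * (x - z)" using gI_lip[OF assms] by (intro mult_left_mono) auto
  finally show ?thesis .
qed

lemma gI_upper: assumes "0 < s" shows "gI s \<le> exp (- (s\<^sup>2)) / (2 * s)"
proof -
  have int: "((\<lambda>t. t / s * exp (- (t\<^sup>2))) has_integral (0 - (- exp (- (s\<^sup>2)) / (2 * s)))) {s..}"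
  proof (rule to_inf_FTC[where F="\<lambda>t. - exp (- (t\<^sup>2)) / (2 * s)" and L=0])
    show "((\<lambda>t. - exp (- (t\<^sup>2)) / (2 * s)) has_real_derivative t / s * exp (- (t\<^sup>2))) (at t)" if "s \<le> t" for t
      using assms by (auto intro!: derivative_eq_intros simp: field_simps)
    show "continuous_on {s..} (\<lambda>t. t / s * exp (- (t\<^sup>2)))" using assms by (intro continuous_intros) auto
    have e: "((\<lambda>t::real. exp (- (t\<^sup>2))) \<longlongrightarrow> 0) at_top" by real_asymp
    show "((\<lambda>t. - exp (- (t\<^sup>2)) / (2 * s)) \<longlongrightarrow> 0) at_top"
    proof -
      have e2: "((\<lambda>t::real. - exp (- (t\<^sup>2))) \<longlongrightarrow> 0) at_top" using tendsto_minus[OF e] by simp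
      show ?thesis using tendsto_divide_zero[OF e2, where c="2 * s"] by simp
    qed
  qed (use assms in auto)
  have "gI s \<le> integral {s..} (\<lambda>t. t / s * exp (- (t\<^sup>2)))"
    unfolding gI_def using assms
    by (intro integral_le[OF gauss_int]) (use int in \<open>auto simp: field_simps intro!: mult_right_mono\<close>)
  also have "\<dots> = 0 - (- exp (- (s\<^sup>2)) / (2 * s))" by (rule integral_unique[OF int])
  also have "\<dots> = exp (- (s\<^sup>2)) / (2 * s)" by simp
  finally show ?thesis .
qed

lemma gI_lower: assumes "0 < s" shows "exp (- (s\<^sup>2)) / (2 * s) \<le> gI s * (1 + 1 / (2 * s\<^sup>2))"
proof -
  have int: "((\<lambda>t. exp (- (t\<^sup>2)) * (1 + 1 / (2 * t\<^sup>2))) has_integral (0 - (- exp (- (s\<^sup>2)) / (2 * s)))) {s..}"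
  proof (rule to_inf_FTC)
    show "((\<lambda>t. - exp (- (t\<^sup>2)) / (2 * t)) has_real_derivative exp (- (t\<^sup>2)) * (1 + 1 / (2 * t\<^sup>2))) (at t)"
      if "s \<le> t" for t
      using assms that by (auto intro!: derivative_eq_intros simp: field_simps power2_eq_square)
    show "continuous_on {s..} (\<lambda>t. exp (- (t\<^sup>2)) * (1 + 1 / (2 * t\<^sup>2)))"
      using assms by (intro continuous_intros) auto
    have "((\<lambda>t::real. - exp (- (t\<^sup>2)) / (2 * t)) \<longlongrightarrow> 0) at_top" by real_asymp
    then show "((\<lambda>t::real. - exp (- (t\<^sup>2)) / (2 * t)) \<longlongrightarrow> 0) at_top" .
  qed (use assms in auto)
  have "exp (- (s\<^sup>2)) / (2 * s) = integral {s..} (\<lambda>t. exp (- (t\<^sup>2)) * (1 + 1 / (2 * t\<^sup>2)))"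
    using int by (simp add: integral_unique)
  also have "\<dots> \<le> integral {s..} (\<lambda>t. exp (- (t\<^sup>2)) * (1 + 1 / (2 * s\<^sup>2)))"
  proof (rule integral_le)
    show "(\<lambda>t. exp (- (t\<^sup>2)) * (1 + 1 / (2 * t\<^sup>2))) integrable_on {s..}" using int by blast
    show "(\<lambda>t. exp (- (t\<^sup>2)) * (1 + 1 / (2 * s\<^sup>2))) integrable_on {s..}"
      using gauss_int by (rule integrable_on_mult_left)
    fix t assume "t \<in> {s..}"
    then have "0 < t" using assms by auto
    from \<open>t \<in> {s..}\<close> have "s\<^sup>2 \<le> t\<^sup>2" using assms by (intro power_mono) auto
    then have "1 / (2 * t\<^sup>2) \<le> 1 / (2 * s\<^sup>2)" using assms \<open>0 < t\<close> by (intro divide_left_mono) auto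
    then show "exp (- (t\<^sup>2)) * (1 + 1 / (2 * t\<^sup>2)) \<le> exp (- (t\<^sup>2)) * (1 + 1 / (2 * s\<^sup>2))"
      by (intro mult_left_mono) auto
  qed
  also have "\<dots> = gI s * (1 + 1 / (2 * s\<^sup>2))" by (simp add: gI_def)
  finally show ?thesis .
qed


lemma Ebound:
  fixes t a c :: real
  assumes "0 \<le> t" "c \<le> 4 * a"
  shows "exp (- 2 * (t - - a)\<^sup>2) \<le> exp (- 2 * a\<^sup>2) * exp (- c * t)"
proof -
  have "c * t \<le> 4 * a * t" using assms by (intro mult_right_mono) auto
  moreover have "0 \<le> t * t" by simp
  moreover have "- 2 * (t - - a)\<^sup>2 = - 2 * a\<^sup>2 - 4 * a * t - 2 * (t * t)"
    by (simp add: power2_eq_square algebra_simps)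
  ultimately have "- 2 * (t - - a)\<^sup>2 \<le> - 2 * a\<^sup>2 + - c * t" by linarith
  then show ?thesis by (simp flip: exp_add)
qed

lemma exp_int: "k > 0 \<Longrightarrow> integral {0..} (\<lambda>t::real. exp (- k * t)) = 1 / k"
  using has_integral_exp_minus_to_infinity[of k 0] by (simp add: integral_unique)

lemma cexp_int:
  assumes "k > 0"
  shows "(\<lambda>t::real. C * exp (- k * t)) integrable_on {0..}"
    "integral {0..} (\<lambda>t::real. C * exp (- k * t)) = C / k"
proof -
  show "(\<lambda>t::real. C * exp (- k * t)) integrable_on {0..}"
    by (intro integrable_on_mult_right integrable_on_exp_minus_to_infinity assms)
  show "integral {0..} (\<lambda>t::real. C * exp (- k * t)) = C / k"
    using exp_int[OF assms] by simp
qed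

lemma A1_bound: assumes "a \<ge> 1" shows "\<bar>A1 (-a)\<bar> \<le> exp (-2 * a\<^sup>2)"
proof -
  have "\<bar>integral {0..} (\<lambda>t. exp (- 2 * (t - - a)\<^sup>2) * erfc t)\<bar>
      \<le> integral {0..} (\<lambda>t. exp (- 2 * a\<^sup>2) * exp (- 1 * t))"
  proof (rule abs_integral_le)
    show "(\<lambda>t. exp (- 2 * a\<^sup>2) * exp (- 1 * t)) integrable_on {0..}" using cexp_int(1)[of 1] by simp
    fix t :: real assume t: "t \<in> {0..}"
    have "\<bar>exp (- 2 * (t - - a)\<^sup>2) * erfc t\<bar> = exp (- 2 * (t - - a)\<^sup>2) * erfc t"
      using erfc_nonneg by simp
    also have "\<dots> \<le> exp (- 2 * (t - - a)\<^sup>2) * 1"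
      using t erfc_le1 by (intro mult_left_mono) auto
    also have "\<dots> \<le> exp (- 2 * a\<^sup>2) * exp (- 1 * t)" using Ebound[of t 1 a] t assms by simp
    finally show "\<bar>exp (- 2 * (t - - a)\<^sup>2) * erfc t\<bar> \<le> exp (- 2 * a\<^sup>2) * exp (- 1 * t)" .
  qed
  also have "\<dots> = exp (- 2 * a\<^sup>2)" using cexp_int(2)[of 1 "exp (- 2 * a\<^sup>2)"] by simp
  finally have I: "\<bar>integral {0..} (\<lambda>t. exp (- 2 * (t - - a)\<^sup>2) * erfc t)\<bar> \<le> exp (- 2 * a\<^sup>2)" .
  have c: "1 / (2 * sqrt (2 * pi)) \<le> 1"
  proof -
    have "1 \<le> sqrt (2 * pi)" using pi_gt3 by simp
    then have "1 \<le> 2 * sqrt (2 * pi)" by linarith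
    then show ?thesis by simp
  qed
  have "\<bar>A1 (-a)\<bar> = 1 / (2 * sqrt (2 * pi)) * \<bar>integral {0..} (\<lambda>t. exp (- 2 * (t - - a)\<^sup>2) * erfc t)\<bar>"
    by (simp add: A1_def abs_mult)
  also have "\<dots> \<le> 1 * exp (- 2 * a\<^sup>2)"
    using I c by (intro mult_mono) auto
  finally show ?thesis by simp
qed

lemma A2_bound: assumes "a \<ge> 1" shows "\<bar>A2 (-a)\<bar> \<le> exp (-2 * a\<^sup>2)"
proof -
  have "\<bar>integral {0..} (\<lambda>t. exp (- 2 * (t - - a)\<^sup>2) * t * (exp (- (t\<^sup>2)) / sqrt pi - t * erfc t))\<bar>
      \<le> integral {0..} (\<lambda>t. exp (- 2 * a\<^sup>2) * exp (- 1 * t))"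
  proof (rule abs_integral_le)
    show "(\<lambda>t. exp (- 2 * a\<^sup>2) * exp (- 1 * t)) integrable_on {0..}" using cexp_int(1)[of 1] by simp
    fix t :: real assume t: "t \<in> {0..}"
    then have t0: "0 \<le> t" by simp
    have sp: "1 \<le> sqrt pi" using pi_gt3 by simp
    have q1: "exp (- (t\<^sup>2)) / sqrt pi \<le> 1" using sp
      by (simp add: divide_le_eq order_trans[of _ 1]) 
    have q2: "0 \<le> exp (- (t\<^sup>2)) / sqrt pi" by simp
    have q3: "0 \<le> t * erfc t" "t * erfc t \<le> t" using t0 erfc_nonneg[of t] erfc_le1[OF t0]
      by (auto simp: mult_left_le)
    have inner: "\<bar>exp (- (t\<^sup>2)) / sqrt pi - t * erfc t\<bar> \<le> 1 + t" using q1 q2 q3 by linarith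
    have ex3: "t + t\<^sup>2 \<le> exp (3 * t)"
    proof -
      have "0 \<le> t * t" by simp
      moreover have "1 + 3 * t + 9 * (t * t) / 2 \<le> exp (3 * t)"
        using exp_lower_Taylor_quadratic[of "3 * t"] t0 by (simp add: power2_eq_square)
      ultimately show ?thesis using t0 unfolding power2_eq_square by linarith
    qed
    have "\<bar>exp (- 2 * (t - - a)\<^sup>2) * t * (exp (- (t\<^sup>2)) / sqrt pi - t * erfc t)\<bar>
        = exp (- 2 * (t - - a)\<^sup>2) * t * \<bar>exp (- (t\<^sup>2)) / sqrt pi - t * erfc t\<bar>"
      using t0 by (simp add: abs_mult)
    also have "\<dots> \<le> exp (- 2 * a\<^sup>2) * exp (- 4 * t) * t * (1 + t)"
      using Ebound[of t 4 a] t0 assms inner by (intro mult_mono) auto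
    also have "\<dots> = exp (- 2 * a\<^sup>2) * exp (- 4 * t) * (t + t\<^sup>2)"
      by (simp add: power2_eq_square algebra_simps)
    also have "\<dots> \<le> exp (- 2 * a\<^sup>2) * exp (- 4 * t) * exp (3 * t)"
      using ex3 by (intro mult_left_mono) auto
    also have "\<dots> = exp (- 2 * a\<^sup>2) * exp (- 1 * t)"
      by (simp add: mult.assoc flip: exp_add)
    finally show "\<bar>exp (- 2 * (t - - a)\<^sup>2) * t * (exp (- (t\<^sup>2)) / sqrt pi - t * erfc t)\<bar>
        \<le> exp (- 2 * a\<^sup>2) * exp (- 1 * t)" .
  qed
  also have "\<dots> = exp (- 2 * a\<^sup>2)" using cexp_int(2)[of 1 "exp (- 2 * a\<^sup>2)"] by simp
  finally have I: "\<bar>integral {0..} (\<lambda>t. exp (- 2 * (t - - a)\<^sup>2) * t * (exp (- (t\<^sup>2)) / sqrt pi - t * erfc t))\<bar> \<le> exp (- 2 * a\<^sup>2)" .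
  have c: "1 / sqrt (2 * pi) \<le> 1"
  proof -
    have "1 \<le> sqrt (2 * pi)" using pi_gt3 by simp
    then show ?thesis by simp
  qed
  have "\<bar>A2 (-a)\<bar> = 1 / sqrt (2 * pi) * \<bar>integral {0..} (\<lambda>t. exp (- 2 * (t - - a)\<^sup>2) * t * (exp (- (t\<^sup>2)) / sqrt pi - t * erfc t))\<bar>"
    by (simp add: A2_def abs_mult)
  also have "\<dots> \<le> 1 * exp (- 2 * a\<^sup>2)"
    using I c by (intro mult_mono) auto
  finally show ?thesis by simp
qed


lemma erfc_exp_bound: assumes "1 \<le> d" shows "erfc d \<le> exp (- d)"
proof -
  have d: "0 < d" using assms by simp
  have sp: "1 \<le> sqrt pi" using pi_gt3 by simp
  have "erfc d \<le> 2 / sqrt pi * (exp (- (d\<^sup>2)) / (2 * d))"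
    unfolding erfc_gI using gI_upper[OF d] by (intro mult_left_mono) auto
  also have "\<dots> = exp (- (d\<^sup>2)) / (sqrt pi * d)" by simp
  also have "\<dots> \<le> exp (- (d\<^sup>2))"
  proof -
    have "1 \<le> sqrt pi * d" using sp assms by (metis mult_mono' mult_1 zero_le_one)
    then show ?thesis by (simp add: divide_le_eq)
  qed
  also have "\<dots> \<le> exp (- d)"
  proof -
    have "d \<le> d * d" using assms by (simp add: mult_le_cancel_left1)
    then show ?thesis by (simp add: power2_eq_square)
  qed
  finally show ?thesis .
qed

lemma erf_0: "erf 0 = 0" by (simp add: erf_def erfc_0)

lemma PW:
  fixes a t1 t2 :: real
  assumes a: "a \<ge> 1" and t2: "0 \<le> t2" "t2 \<le> t1"
  shows "\<bar>1 / (t1 - t2) * (exp (- 2 * (t1 - - a)\<^sup>2) * (erf (t1 - t2) + erf (sqrt 2 * (t2 - - a)))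
          + exp (- 2 * (t2 - - a)\<^sup>2) * (erf (t1 - t2) - erf (sqrt 2 * (t1 - - a))))\<bar>
   \<le> exp (- 2 * a\<^sup>2) * 2 * exp (- (4 * a) * t1) + 24 * ((1 + a) * exp (- 2 * a\<^sup>2) * exp (- 1 * t1) * exp (- (4 * a - 2) * t2))"
    (is "\<bar>?f\<bar> \<le> ?R1 + 24 * ?M")
proof -
  define d where "d = t1 - t2"
  define E1 where "E1 = exp (- 2 * (t1 - - a)\<^sup>2)"
  define E2 where "E2 = exp (- 2 * (t2 - - a)\<^sup>2)"
  define e1 where "e1 = erf (sqrt 2 * (t1 - - a))"
  define e2 where "e2 = erf (sqrt 2 * (t2 - - a))"
  define ed where "ed = erf d"
  have f: "?f = 1 / d * (E1 * (ed + e2) + E2 * (ed - e1))"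
    by (simp add: d_def E1_def E2_def e1_def e2_def ed_def)
  have R1: "0 \<le> ?R1" by simp
  have M0: "0 \<le> ?M" using a by simp
  show ?thesis
  proof (cases "d = 0")
    case True
    have "?f = 0" unfolding f True by simp
    then show ?thesis using R1 M0 by linarith
  next
    case False
    then have d: "0 < d" using t2 by (simp add: d_def)
    have s2: "1 \<le> sqrt 2" by simp
    have sqpi: "1 \<le> sqrt pi" using pi_gt3 by simp
    have s2pi: "sqrt 2 \<le> sqrt pi" using pi_gt3 by simp
    have ed: "0 \<le> ed" "ed \<le> 1" using erf_bounds[of d] d by (auto simp: ed_def)
    have arg1: "0 \<le> sqrt 2 * (t1 - - a)" using a t2 by simp
    have arg2: "0 \<le> sqrt 2 * (t2 - - a)" using a t2 by simp
    have e1: "0 \<le> e1" "e1 \<le> 1" using erf_bounds[OF arg1] by (auto simp: e1_def)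
    have e2: "0 \<le> e2" "e2 \<le> 1" using erf_bounds[OF arg2] by (auto simp: e2_def)
    have "d \<le> sqrt 2 * (t1 - - a)"
    proof -
      have "d \<le> 1 * (t1 - - a)" using a t2 by (simp add: d_def)
      also have "\<dots> \<le> sqrt 2 * (t1 - - a)" using s2 a t2 by (intro mult_right_mono) auto
      finally show ?thesis .
    qed
    then have ed_e1: "ed \<le> e1" unfolding ed_def e1_def by (rule erf_mono)
    have e2_e1: "e2 \<le> e1" unfolding e1_def e2_def using t2 by (intro erf_mono) auto
    have lip12: "e1 - e2 \<le> 2 * d"
    proof -
      have "e1 - e2 \<le> 2 / sqrt pi * (sqrt 2 * (t1 - - a) - sqrt 2 * (t2 - - a))"
        unfolding e1_def e2_def using t2 by (intro erf_lip) auto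
      also have "\<dots> = 2 / sqrt pi * (sqrt 2 * d)" by (simp add: d_def algebra_simps)
      also have "\<dots> \<le> 2 / sqrt pi * (sqrt pi * d)"
        using s2pi d by (intro mult_left_mono mult_right_mono) auto
      also have "\<dots> = 2 * d" using sqpi by simp
      finally show ?thesis .
    qed
    have liped: "ed \<le> 2 * d"
    proof -
      have "ed - erf 0 \<le> 2 / sqrt pi * (d - 0)" unfolding ed_def using d by (intro erf_lip) auto
      also have "\<dots> \<le> 2 * d" using sqpi d by (simp add: divide_le_eq mult_le_cancel_right1 order_trans[of _ 1])
      finally show ?thesis by (simp add: erf_0)
    qed
    have E1p: "0 < E1" and E2p: "0 < E2" by (auto simp: E1_def E2_def)
    define u where "u = 2 * d * (t1 + t2 + 2 * a)"
    have u0: "0 \<le> u" using d t2 a by (simp add: u_def)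
    have E1E2: "E1 = E2 * exp (- u)"
    proof -
      have "- 2 * (t1 - - a)\<^sup>2 = - 2 * (t2 - - a)\<^sup>2 + - u"
        by (simp add: u_def d_def power2_eq_square algebra_simps)
      then show ?thesis by (simp add: E1_def E2_def flip: exp_add)
    qed
    have E1le: "E1 \<le> E2" using E1E2 E2p u0 by (simp add: mult_le_cancel_left1)
    have Ediff: "E2 - E1 \<le> u * E2"
    proof -
      have "E2 * (1 + - u) \<le> E2 * exp (- u)" using E2p exp_ge_add_one_self[of "- u"] by (intro mult_left_mono) auto
      then show ?thesis using E1E2 by (simp add: algebra_simps)
    qed
    have E1b: "E1 \<le> exp (- 2 * a\<^sup>2) * exp (- (4 * a) * t1)" unfolding E1_def using t2 by (intro Ebound) auto
    have E2b: "E2 \<le> exp (- 2 * a\<^sup>2) * exp (- (4 * a) * t2)" unfolding E2_def using t2 by (intro Ebound) auto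
    have KE: "E2 * exp (- d) * (1 + t2 + a) \<le> ?M"
    proof -
      have "1 + t2 + a \<le> (1 + a) * exp t2"
      proof -
        have "1 + t2 + a \<le> (1 + a) * (1 + t2)" using a t2 by (simp add: algebra_simps)
        also have "\<dots> \<le> (1 + a) * exp t2" using a by (intro mult_left_mono) auto
        finally show ?thesis .
      qed
      then have "E2 * exp (- d) * (1 + t2 + a) \<le> (exp (- 2 * a\<^sup>2) * exp (- (4 * a) * t2)) * exp (- d) * ((1 + a) * exp t2)"
        using E2b E2p t2 a by (intro mult_mono) auto
      also have "\<dots> = (1 + a) * exp (- 2 * a\<^sup>2) * (exp (- (4 * a) * t2) * exp (- d) * exp t2)"
        by (simp only: mult_ac)
      also have "exp (- (4 * a) * t2) * exp (- d) * exp t2 = exp (- 1 * t1) * exp (- (4 * a - 2) * t2)"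
        by (simp add: d_def algebra_simps flip: exp_add)
      also have "(1 + a) * exp (- 2 * a\<^sup>2) * (exp (- 1 * t1) * exp (- (4 * a - 2) * t2)) = ?M"
        by (simp only: mult_ac)
      finally show ?thesis .
    qed
    have absf: "\<bar>?f\<bar> = \<bar>E1 * (ed + e2) + E2 * (ed - e1)\<bar> / d" using d f by (simp add: abs_mult)
    show ?thesis
    proof (cases "d \<le> 1")
      case True
      have X: "ed * (E1 + E2) \<le> 2 * d * (2 * E2)"
        using liped ed E1le E1p E2p by (intro mult_mono) auto
      have Y1: "e1 * (E2 - E1) \<le> 1 * (u * E2)" using e1 Ediff E1le by (intro mult_mono) auto
      have Y2: "E1 * (e1 - e2) \<le> E2 * (2 * d)" using E1le lip12 e2_e1 E2p by (intro mult_mono) auto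
      have X0: "0 \<le> ed * (E1 + E2)" using ed E1p E2p by simp
      have Y10: "0 \<le> e1 * (E2 - E1)" using e1 E1le by simp
      have Y20: "0 \<le> E1 * (e1 - e2)" using E1p e2_e1 by simp
      have B: "E1 * (ed + e2) + E2 * (ed - e1) = ed * (E1 + E2) - (e1 * (E2 - E1) + E1 * (e1 - e2))"
        by (simp add: algebra_simps)
      have "\<bar>E1 * (ed + e2) + E2 * (ed - e1)\<bar> \<le> 2 * d * (2 * E2) + 1 * (u * E2) + E2 * (2 * d)"
        unfolding B using X Y1 Y2 X0 Y10 Y20 by linarith
      also have "\<dots> = d * (E2 * (6 + 2 * (t1 + t2 + 2 * a)))" by (simp add: u_def algebra_simps)
      finally have "\<bar>E1 * (ed + e2) + E2 * (ed - e1)\<bar> / d \<le> E2 * (6 + 2 * (t1 + t2 + 2 * a))"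
        using d by (simp add: divide_le_eq mult.commute)
      also have "\<dots> \<le> E2 * (8 * (1 + t2 + a))"
        using True E2p a t2 by (intro mult_left_mono) (auto simp: d_def)
      also have "\<dots> \<le> E2 * (8 * (1 + t2 + a)) * (3 * exp (- d))"
      proof -
        have "exp (- 1) \<le> exp (- d)" using True by simp
        moreover have "1 \<le> 3 * exp (- 1::real)" using exp_le by (simp add: exp_minus field_simps)
        ultimately have "1 \<le> 3 * exp (- d)" by linarith
        moreover have "0 \<le> E2 * (8 * (1 + t2 + a))" using E2p t2 a by simp
        ultimately show ?thesis by (simp add: mult_le_cancel_left1)
      qed
      also have "\<dots> = 24 * (E2 * exp (- d) * (1 + t2 + a))" by (simp add: algebra_simps)
      also have "\<dots> \<le> 24 * ?M" using KE by simp
      finally show ?thesis using absf R1 by linarith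
    next
      case False
      have P: "0 \<le> E1 * (ed + e2)" using E1p ed e2 by simp
      have Q: "0 \<le> E2 * (e1 - ed)" using E2p ed_e1 by simp
      have "\<bar>E1 * (ed + e2) + E2 * (ed - e1)\<bar> \<le> E1 * (ed + e2) + E2 * (e1 - ed)"
        using P Q by (simp add: algebra_simps abs_le_iff)
      also have "\<dots> \<le> E1 * 2 + E2 * exp (- d)"
      proof (intro add_mono mult_left_mono)
        show "ed + e2 \<le> 2" using ed e2 by simp
        have "e1 - ed \<le> erfc d" using e1 by (simp add: ed_def erf_def)
        also have "\<dots> \<le> exp (- d)" using False by (intro erfc_exp_bound) auto
        finally show "e1 - ed \<le> exp (- d)" .
      qed (use E1p E2p in auto)
      finally have B: "\<bar>E1 * (ed + e2) + E2 * (ed - e1)\<bar> \<le> E1 * 2 + E2 * exp (- d)" .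
      have "\<bar>E1 * (ed + e2) + E2 * (ed - e1)\<bar> / d \<le> \<bar>E1 * (ed + e2) + E2 * (ed - e1)\<bar>"
        using False by (simp add: divide_le_eq mult_le_cancel_left1)
      also have "\<dots> \<le> E1 * 2 + E2 * exp (- d)" by (rule B)
      also have "\<dots> \<le> ?R1 + 24 * ?M"
      proof (rule add_mono)
        show "E1 * 2 \<le> ?R1" using E1b by simp
        have "E2 * exp (- d) \<le> E2 * exp (- d) * (1 + t2 + a)"
        proof -
          have "0 \<le> E2 * exp (- d)" using E2p by simp
          then show ?thesis using t2 a by (simp add: mult_le_cancel_left1)
        qed
        also have "\<dots> \<le> ?M" by (rule KE)
        also have "\<dots> \<le> 24 * ?M" using M0 by linarith
        finally show "E2 * exp (- d) \<le> 24 * ?M" .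
      qed
      finally show ?thesis using absf by simp
    qed
  qed
qed


lemma inner_bound:
  fixes a t1 :: real
  assumes a: "a \<ge> 1" and t1: "0 \<le> t1"
  shows "\<bar>integral {0..t1} (\<lambda>t2. 1 / (t1 - t2) * (exp (- 2 * (t1 - - a)\<^sup>2) * (erf (t1 - t2) + erf (sqrt 2 * (t2 - - a)))
          + exp (- 2 * (t2 - - a)\<^sup>2) * (erf (t1 - t2) - erf (sqrt 2 * (t1 - - a)))))\<bar>
     \<le> 26 * exp (- 2 * a\<^sup>2) * exp (- 1 * t1)"
proof -
  define R1 where "R1 = exp (- 2 * a\<^sup>2) * 2 * exp (- (4 * a) * t1)"
  define C where "C = 24 * ((1 + a) * exp (- 2 * a\<^sup>2) * exp (- 1 * t1))"
  define k where "k = 4 * a - 2"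
  have k: "k > 0" using a by (simp add: k_def)
  have C0: "0 \<le> C" using a by (simp add: C_def)
  have int2: "(\<lambda>t2. C * exp (- k * t2)) integrable_on {0..t1}"
    by (intro integrable_continuous_interval continuous_intros)
  have "\<bar>integral {0..t1} (\<lambda>t2. 1 / (t1 - t2) * (exp (- 2 * (t1 - - a)\<^sup>2) * (erf (t1 - t2) + erf (sqrt 2 * (t2 - - a)))
          + exp (- 2 * (t2 - - a)\<^sup>2) * (erf (t1 - t2) - erf (sqrt 2 * (t1 - - a)))))\<bar>
     \<le> integral {0..t1} (\<lambda>t2. R1 + C * exp (- k * t2))"
  proof (rule abs_integral_le)
    show "(\<lambda>t2. R1 + C * exp (- k * t2)) integrable_on {0..t1}"
      by (intro integrable_continuous_interval continuous_intros)
    fix t2 assume "t2 \<in> {0..t1}"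
    then show "\<bar>1 / (t1 - t2) * (exp (- 2 * (t1 - - a)\<^sup>2) * (erf (t1 - t2) + erf (sqrt 2 * (t2 - - a)))
          + exp (- 2 * (t2 - - a)\<^sup>2) * (erf (t1 - t2) - erf (sqrt 2 * (t1 - - a))))\<bar> \<le> R1 + C * exp (- k * t2)"
      using PW[OF a, of t2 t1] by (simp add: R1_def C_def k_def mult.assoc)
  qed
  also have "\<dots> = R1 * t1 + integral {0..t1} (\<lambda>t2. C * exp (- k * t2))"
  proof -
    have "integral {0..t1} (\<lambda>t2. R1 + C * exp (- k * t2)) = integral {0..t1} (\<lambda>t2. R1) + integral {0..t1} (\<lambda>t2. C * exp (- k * t2))"
      by (rule integral_add) (use int2 in \<open>auto intro: integrable_continuous_interval continuous_intros\<close>)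
    then show ?thesis using t1 by simp
  qed
  also have "\<dots> \<le> R1 * t1 + integral {0..} (\<lambda>t2. C * exp (- k * t2))"
  proof -
    have "integral {0..t1} (\<lambda>t2. C * exp (- k * t2)) \<le> integral {0..} (\<lambda>t2. C * exp (- k * t2))"
      using int2 cexp_int(1)[OF k, of C] C0 by (intro integral_subset_le) auto
    then show ?thesis by simp
  qed
  also have "\<dots> = R1 * t1 + C / k" using cexp_int(2)[OF k, of C] by simp
  also have "\<dots> \<le> 2 * exp (- 2 * a\<^sup>2) * exp (- 1 * t1) + 24 * exp (- 2 * a\<^sup>2) * exp (- 1 * t1)"
  proof (rule add_mono)
    have "t1 \<le> exp ((4 * a - 1) * t1)"
    proof -
      have "t1 \<le> exp t1" using exp_ge_add_one_self[of t1] by linarith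
      also have "\<dots> \<le> exp ((4 * a - 1) * t1)" using a t1
        by (simp add: mult_le_cancel_right1)
      finally show ?thesis .
    qed
    then have "t1 * exp (- (4 * a) * t1) \<le> exp ((4 * a - 1) * t1) * exp (- (4 * a) * t1)"
      by (intro mult_right_mono) auto
    also have "\<dots> = exp (- 1 * t1)" by (simp add: algebra_simps flip: exp_add)
    finally have "t1 * exp (- (4 * a) * t1) \<le> exp (- 1 * t1)" .
    then show "R1 * t1 \<le> 2 * exp (- 2 * a\<^sup>2) * exp (- 1 * t1)"
      unfolding R1_def by (simp add: algebra_simps)
    have "(1 + a) / k \<le> 1" using a k by (simp add: k_def divide_le_eq)
    moreover have "C / k = 24 * (exp (- 2 * a\<^sup>2) * exp (- 1 * t1)) * ((1 + a) / k)"
      using k by (simp add: C_def field_simps)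
    ultimately have "C / k \<le> 24 * (exp (- 2 * a\<^sup>2) * exp (- 1 * t1)) * 1"
      by (metis mult_left_mono zero_le_mult_iff exp_ge_zero zero_le_numeral)
    then show "C / k \<le> 24 * exp (- 2 * a\<^sup>2) * exp (- 1 * t1)" by simp
  qed
  also have "\<dots> = 26 * exp (- 2 * a\<^sup>2) * exp (- 1 * t1)" by simp
  finally show ?thesis .
qed

lemma A4_bound: assumes a: "a \<ge> 1" shows "\<bar>A4 (-a)\<bar> \<le> 26 * exp (-2 * a\<^sup>2)"
proof -
  have "\<bar>integral {0..} (\<lambda>t1. integral {0..t1} (\<lambda>t2. 1 / (t1 - t2) * (exp (- 2 * (t1 - - a)\<^sup>2) * (erf (t1 - t2) + erf (sqrt 2 * (t2 - - a)))
          + exp (- 2 * (t2 - - a)\<^sup>2) * (erf (t1 - t2) - erf (sqrt 2 * (t1 - - a))))))\<bar>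
      \<le> integral {0..} (\<lambda>t1. (26 * exp (- 2 * a\<^sup>2)) * exp (- 1 * t1))"
  proof (rule abs_integral_le)
    show "(\<lambda>t1. (26 * exp (- 2 * a\<^sup>2)) * exp (- 1 * t1)) integrable_on {0..}"
      using cexp_int(1)[of 1] by simp
  qed (use inner_bound[OF a] in auto)
  also have "\<dots> = 26 * exp (- 2 * a\<^sup>2)" using cexp_int(2)[of 1 "26 * exp (- 2 * a\<^sup>2)"] by simp
  finally have I: "\<bar>integral {0..} (\<lambda>t1. integral {0..t1} (\<lambda>t2. 1 / (t1 - t2) * (exp (- 2 * (t1 - - a)\<^sup>2) * (erf (t1 - t2) + erf (sqrt 2 * (t2 - - a)))
          + exp (- 2 * (t2 - - a)\<^sup>2) * (erf (t1 - t2) - erf (sqrt 2 * (t1 - - a))))))\<bar> \<le> 26 * exp (- 2 * a\<^sup>2)" .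
  have c: "1 / sqrt (2 * pi) \<le> 1"
  proof -
    have "1 \<le> sqrt (2 * pi)" using pi_gt3 by simp
    then show ?thesis by simp
  qed
  have "\<bar>A4 (-a)\<bar> = 1 / sqrt (2 * pi) * \<bar>integral {0..} (\<lambda>t1. integral {0..t1} (\<lambda>t2. 1 / (t1 - t2) * (exp (- 2 * (t1 - - a)\<^sup>2) * (erf (t1 - t2) + erf (sqrt 2 * (t2 - - a)))
          + exp (- 2 * (t2 - - a)\<^sup>2) * (erf (t1 - t2) - erf (sqrt 2 * (t1 - - a))))))\<bar>"
    unfolding A4_def by (simp only: abs_mult abs_minus_cancel) simp
  also have "\<dots> \<le> 1 * (26 * exp (- 2 * a\<^sup>2))"
    using I c by (intro mult_mono) auto
  finally show ?thesis by simp
qed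

lemma rest_bound: "a \<ge> 1 \<Longrightarrow> \<bar>A1 (-a)\<bar> + \<bar>A2 (-a)\<bar> + \<bar>A4 (-a)\<bar> \<le> 28 * exp (-2 * a\<^sup>2)"
  using A1_bound[of a] A2_bound[of a] A4_bound[of a] by linarith


definition gg :: "real \<Rightarrow> real" where
  "gg y = \<bar>y\<bar> * exp (- 2 * y\<^sup>2) / (2 * sqrt (2 * pi))"

lemma alg3:
  fixes a q w X E G c :: real
  assumes "a > 0" "q > 0" "w > 0" "E > 0" "X * E = 1"
  shows "(1/4) * (2 / q * G) * (a * E / (w * q) + (1/4 + a\<^sup>2) * (2 - c)) / (a * E / (2 * (w * q)))
     = (2 * (w * a) * X * G) * (E / (2 * (w * q) * a) + (1/4 + a\<^sup>2) / (2 * a\<^sup>2) * (2 - c))"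
proof -
  have X: "X = 1 / E" using assms by (simp add: field_simps)
  show ?thesis unfolding X using assms by (simp add: field_simps power2_eq_square)
qed

lemma A3_ratio:
  fixes a :: real assumes a: "a > 0"
  defines "s \<equiv> sqrt 2 * a"
  shows "A3 (-a) / gg (-a) = (2 * s * exp (s\<^sup>2) * gI s) *
            (exp (-2 * a\<^sup>2) / (2 * sqrt (2 * pi) * a) + (1/4 + a\<^sup>2) / (2 * a\<^sup>2) * (2 - erfc s))"
proof -
  have s2: "s\<^sup>2 = 2 * a\<^sup>2" by (simp add: s_def power_mult_distrib)
  have e1: "erf (sqrt 2 * - a) = erfc s - 1"
    by (simp add: erf_def s_def erfc_neg[of "sqrt 2 * a", simplified])
  have sp: "sqrt (2 * pi) = sqrt 2 * sqrt pi" by (simp add: real_sqrt_mult)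
  have ex: "exp (s\<^sup>2) * exp (- 2 * a\<^sup>2) = 1" by (simp add: s2 flip: exp_add)
  have "A3 (-a) = (1/4) * erfc s * (a * exp (- 2 * a\<^sup>2) / sqrt (2 * pi) + (1/4 + a\<^sup>2) * (2 - erfc s))"
    unfolding A3_def e1 by (simp add: algebra_simps)
  also have "\<dots> = (1/4) * (2 / sqrt pi * gI s) * (a * exp (- 2 * a\<^sup>2) / sqrt (2 * pi) + (1/4 + a\<^sup>2) * (2 - erfc s))"
    by (simp add: erfc_gI[of s])
  finally have A: "A3 (-a) = \<dots>" .
  have G: "gg (-a) = a * exp (- 2 * a\<^sup>2) / (2 * sqrt (2 * pi))" using a by (simp add: gg_def)
  show ?thesis unfolding A G sp
    using alg3[OF a _ _ _ ex, of "sqrt pi" "sqrt 2" "gI s" "erfc s"] by (simp add: s_def)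
qed

lemma r_lim_s: "((\<lambda>s. 2 * s * exp (s\<^sup>2) * gI s) \<longlongrightarrow> 1) at_top"
proof (rule tendsto_sandwich)
  show "\<forall>\<^sub>F s in at_top. 1 / (1 + 1 / (2 * s\<^sup>2)) \<le> 2 * s * exp (s\<^sup>2) * gI s"
  proof (rule eventually_at_top_linorderI[of 1])
    fix s :: real assume "1 \<le> s"
    then have s: "s > 0" by simp
    have "exp (- (s\<^sup>2)) / (2 * s) \<le> gI s * (1 + 1 / (2 * s\<^sup>2))" by (rule gI_lower[OF s])
    then have "exp (- (s\<^sup>2)) / (2 * s) * (2 * s * exp (s\<^sup>2)) \<le> gI s * (1 + 1 / (2 * s\<^sup>2)) * (2 * s * exp (s\<^sup>2))"
      using s by (intro mult_right_mono) auto
    moreover have "exp (- (s\<^sup>2)) / (2 * s) * (2 * s * exp (s\<^sup>2)) = 1" using s by (simp flip: exp_add)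
    ultimately have "1 \<le> (2 * s * exp (s\<^sup>2) * gI s) * (1 + 1 / (2 * s\<^sup>2))" by (simp add: algebra_simps)
    moreover have "0 < 1 + 1 / (2 * s\<^sup>2)" using s by (simp add: add_pos_nonneg)
    ultimately show "1 / (1 + 1 / (2 * s\<^sup>2)) \<le> 2 * s * exp (s\<^sup>2) * gI s"
      by (simp add: divide_le_eq)
  qed
  show "\<forall>\<^sub>F s in at_top. 2 * s * exp (s\<^sup>2) * gI s \<le> 1"
  proof (rule eventually_at_top_linorderI[of 1])
    fix s :: real assume "1 \<le> s"
    then have s: "s > 0" by simp
    have "2 * s * exp (s\<^sup>2) * gI s \<le> 2 * s * exp (s\<^sup>2) * (exp (- (s\<^sup>2)) / (2 * s))"
      using gI_upper[OF s] s by (intro mult_left_mono) auto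
    also have "\<dots> = 1" using s by (simp flip: exp_add)
    finally show "2 * s * exp (s\<^sup>2) * gI s \<le> 1" .
  qed
  show "((\<lambda>s::real. 1 / (1 + 1 / (2 * s\<^sup>2))) \<longlongrightarrow> 1) at_top" by real_asymp
qed auto

lemma erfc_lim: "(erfc \<longlongrightarrow> 0) at_top"
proof (rule tendsto_sandwich[where f="\<lambda>_. 0" and h="\<lambda>s. 2 / sqrt pi * (exp (- (s\<^sup>2)) / (2 * s))"])
  show "\<forall>\<^sub>F s in at_top. 0 \<le> erfc s" by (simp add: erfc_nonneg)
  show "\<forall>\<^sub>F s in at_top. erfc s \<le> 2 / sqrt pi * (exp (- (s\<^sup>2)) / (2 * s))"
  proof (rule eventually_at_top_linorderI[of 1])
    fix s :: real assume "1 \<le> s"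
    then show "erfc s \<le> 2 / sqrt pi * (exp (- (s\<^sup>2)) / (2 * s))"
      unfolding erfc_gI using gI_upper[of s] by (intro mult_left_mono) auto
  qed
  show "((\<lambda>s::real. 2 / sqrt pi * (exp (- (s\<^sup>2)) / (2 * s))) \<longlongrightarrow> 0) at_top" by real_asymp
qed auto

lemma sqrt2_at_top: "filterlim (\<lambda>a::real. sqrt 2 * a) at_top at_top"
  by real_asymp

lemma A3_lim: "((\<lambda>a. A3 (-a) / gg (-a)) \<longlongrightarrow> 1) at_top"
proof -
  let ?s = "\<lambda>a::real. sqrt 2 * a"
  have r: "((\<lambda>a. 2 * ?s a * exp ((?s a)\<^sup>2) * gI (?s a)) \<longlongrightarrow> 1) at_top"
    using filterlim_compose[OF r_lim_s sqrt2_at_top] by (simp add: o_def)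
  have e: "((\<lambda>a. erfc (?s a)) \<longlongrightarrow> 0) at_top"
    using filterlim_compose[OF erfc_lim sqrt2_at_top] by (simp add: o_def)
  have l1: "((\<lambda>a::real. exp (-2 * a\<^sup>2) / (2 * sqrt (2 * pi) * a)) \<longlongrightarrow> 0) at_top" by real_asymp
  have l2: "((\<lambda>a::real. (1/4 + a\<^sup>2) / (2 * a\<^sup>2)) \<longlongrightarrow> 1/2) at_top" by real_asymp
  have "((\<lambda>a. (2 * ?s a * exp ((?s a)\<^sup>2) * gI (?s a)) *
            (exp (-2 * a\<^sup>2) / (2 * sqrt (2 * pi) * a) + (1/4 + a\<^sup>2) / (2 * a\<^sup>2) * (2 - erfc (?s a))))
        \<longlongrightarrow> 1 * (0 + 1/2 * (2 - 0))) at_top"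
    by (intro tendsto_intros r e l1 l2)
  then have "((\<lambda>a. (2 * ?s a * exp ((?s a)\<^sup>2) * gI (?s a)) *
            (exp (-2 * a\<^sup>2) / (2 * sqrt (2 * pi) * a) + (1/4 + a\<^sup>2) / (2 * a\<^sup>2) * (2 - erfc (?s a))))
        \<longlongrightarrow> 1) at_top" by simp
  moreover have "\<forall>\<^sub>F a in at_top. (2 * ?s a * exp ((?s a)\<^sup>2) * gI (?s a)) *
            (exp (-2 * a\<^sup>2) / (2 * sqrt (2 * pi) * a) + (1/4 + a\<^sup>2) / (2 * a\<^sup>2) * (2 - erfc (?s a)))
         = A3 (-a) / gg (-a)"
    by (rule eventually_at_top_linorderI[of 1]) (simp add: A3_ratio)
  ultimately show ?thesis by (rule Lim_transform_eventually)
qed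

lemma rest_lim: "((\<lambda>a. (A1 (-a) + A2 (-a) + A4 (-a)) / gg (-a)) \<longlongrightarrow> 0) at_top"
proof (rule Lim_null_comparison)
  show "\<forall>\<^sub>F a in at_top. norm ((A1 (-a) + A2 (-a) + A4 (-a)) / gg (-a)) \<le> 56 * sqrt (2 * pi) / a"
  proof (rule eventually_at_top_linorderI[of 1])
    fix a :: real assume a: "1 \<le> a"
    have gpos: "gg (-a) = a * exp (-2 * a\<^sup>2) / (2 * sqrt (2 * pi))" using a by (simp add: gg_def)
    have "norm ((A1 (-a) + A2 (-a) + A4 (-a)) / gg (-a)) \<le> 28 * exp (-2 * a\<^sup>2) / gg (-a)"
    proof -
      have gp: "gg (-a) > 0" using a by (simp add: gpos)
      have "\<bar>A1 (-a) + A2 (-a) + A4 (-a)\<bar> \<le> 28 * exp (-2 * a\<^sup>2)"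
        using rest_bound[OF a] by linarith
      then show ?thesis unfolding norm_divide real_norm_def using gp
        by (simp add: divide_right_mono)
    qed
    also have "\<dots> = 56 * sqrt (2 * pi) / a" unfolding gpos using a by (simp add: field_simps)
    finally show "norm ((A1 (-a) + A2 (-a) + A4 (-a)) / gg (-a)) \<le> 56 * sqrt (2 * pi) / a" .
  qed
  show "((\<lambda>a::real. 56 * sqrt (2 * pi) / a) \<longlongrightarrow> 0) at_top" by real_asymp
qed

theorem lemma9:
  shows "A \<sim>[at_bot] (\<lambda>y. \<bar>y\<bar> * exp (- 2 * y\<^sup>2) / (2 * sqrt (2 * pi)))"
proof (rule asymp_equivI')
  have "((\<lambda>a. A3 (-a) / gg (-a) + (A1 (-a) + A2 (-a) + A4 (-a)) / gg (-a)) \<longlongrightarrow> 1 + 0) at_top"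
    by (intro tendsto_add A3_lim rest_lim)
  then have "((\<lambda>a. A (-a) / gg (-a)) \<longlongrightarrow> 1) at_top"
    by (simp add: A_def add_divide_distrib algebra_simps)
  then show "((\<lambda>y. A y / (\<bar>y\<bar> * exp (- 2 * y\<^sup>2) / (2 * sqrt (2 * pi)))) \<longlongrightarrow> 1) at_bot"
    unfolding filterlim_at_bot_mirror gg_def by simp
qed

end
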